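(* Let $(\mathcal A,\Delta)$ be a weak bigraded Batalin-Vilkovisky algebra with bigraded Gerstenhaber bracket $[\cdot,\cdot]$ generated by $\Delta$, and let $\delta$ be an $R$-linear operator on $\mathcal A$ of bidegree $(1,0)$ which is a derivation of degree $1$ of the bigraded $R$-algebra $\mathcal A$. Then the following are equivalent: (i) $\delta[x,y]=[\delta x,y]-(-1)^{|x|}[x,\delta y]$ for all homogeneous $x,y\in\mathcal A$; (ii) the graded commutator $[\delta,\Delta]=\delta\Delta+\Delta\delta$ is a derivation of degree $0$ of the bigraded algebra $\mathcal A$, i.e. $[\delta,\Delta](ab)=([\delta,\Delta]a)b+a([\delta,\Delta]b)$ for all $a,b\in\mathcal A$.
   Context: $R$ is a commutative ring. A bigraded Gerstenhaber algebra is a bigraded commutative $R$-algebra $\mathcal A$ (signs governed by the total degree $|\cdot|$, the sum of the two degrees) with an $R$-bilinear bracket of bidegree $(0,-1)$ which becomes a bigraded Lie bracket when the second degree is lowered by one, such that for $a$ of bidegree $(p,q)$, $[a,\cdot]$ is a derivation of bidegree $(p,q-1)$. An $R$-linear operator $\Delta$ of bidegree $(0,-1)$ generates the bracket if $[a,b]=(-1)^{|a|}\big(\Delta(ab)-(\Delta a)b-(-1)^{|a|}a(\Delta b)\big)$ for all homogeneous $a,b$. A weak bigraded Batalin-Vilkovisky algebra is a bigraded Gerstenhaber algebra together with such a generator. *)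

theory Defs
  imports Complex_Main
begin

definition sgnp :: "int \<Rightarrow> 'a::ab_group_add \<Rightarrow> 'a" where
  "sgnp k x = (if even k then x else - x)"

definition r_linear :: "('r::comm_ring_1 \<Rightarrow> 'a::ab_group_add \<Rightarrow> 'a) \<Rightarrow> ('a \<Rightarrow> 'a) \<Rightarrow> bool" where
  "r_linear scale f \<longleftrightarrow> (\<forall>x y. f (x + y) = f x + f y) \<and> (\<forall>r x. f (scale r x) = scale r (f x))"

text \<open>A bigraded R-module: the whole type is the direct sum of the submodules G p q.\<close>
definition bigraded_module :: "('r::comm_ring_1 \<Rightarrow> 'a::ab_group_add \<Rightarrow> 'a) \<Rightarrow> (int \<Rightarrow> int \<Rightarrow> 'a set) \<Rightarrow> bool" where
  "bigraded_module scale G \<longleftrightarrow>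
     module scale \<and>
     (\<forall>p q. 0 \<in> G p q \<and> (\<forall>x\<in>G p q. \<forall>y\<in>G p q. x + y \<in> G p q) \<and> (\<forall>r. \<forall>x\<in>G p q. scale r x \<in> G p q)) \<and>
     (\<forall>x. \<exists>S c. finite S \<and> (\<forall>pq\<in>S. c pq \<in> G (fst pq) (snd pq)) \<and> x = sum c S) \<and>
     (\<forall>S c. finite S \<and> (\<forall>pq\<in>S. c pq \<in> G (fst pq) (snd pq)) \<and> sum c S = 0
            \<longrightarrow> (\<forall>pq\<in>S. c pq = 0))"

text \<open>A bigraded commutative R-algebra (associative multiplication of the ring type),
  signs governed by the total degree p+q.\<close>
definition bigraded_comm_algebra :: "('r::comm_ring_1 \<Rightarrow> 'a::ring \<Rightarrow> 'a) \<Rightarrow> (int \<Rightarrow> int \<Rightarrow> 'a set) \<Rightarrow> bool" where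
  "bigraded_comm_algebra scale G \<longleftrightarrow>
     bigraded_module scale G \<and>
     (\<forall>r a b. scale r (a * b) = scale r a * b \<and> scale r (a * b) = a * scale r b) \<and>
     (\<forall>p q p' q' a b. a \<in> G p q \<longrightarrow> b \<in> G p' q' \<longrightarrow> a * b \<in> G (p + p') (q + q')) \<and>
     (\<forall>p q p' q' a b. a \<in> G p q \<longrightarrow> b \<in> G p' q' \<longrightarrow> a * b = sgnp ((p + q) * (p' + q')) (b * a))"

text \<open>A bigraded Gerstenhaber algebra: bracket of bidegree (0,-1), R-bilinear, a bigraded Lie
  bracket after lowering the second degree by one, and [a,-] a derivation of bidegree (p,q-1).\<close>
definition bigraded_gerstenhaber :: "('r::comm_ring_1 \<Rightarrow> 'a::ring \<Rightarrow> 'a) \<Rightarrow> (int \<Rightarrow> int \<Rightarrow> 'a set)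
     \<Rightarrow> ('a \<Rightarrow> 'a \<Rightarrow> 'a) \<Rightarrow> bool" where
  "bigraded_gerstenhaber scale G br \<longleftrightarrow>
     bigraded_comm_algebra scale G \<and>
     (\<forall>a. r_linear scale (br a)) \<and> (\<forall>b. r_linear scale (\<lambda>a. br a b)) \<and>
     (\<forall>p q p' q' a b. a \<in> G p q \<longrightarrow> b \<in> G p' q' \<longrightarrow> br a b \<in> G (p + p') (q + q' - 1)) \<and>
     (\<forall>p q p' q' a b. a \<in> G p q \<longrightarrow> b \<in> G p' q' \<longrightarrow>
        br a b = - sgnp ((p + q - 1) * (p' + q' - 1)) (br b a)) \<and>
     (\<forall>p q p' q' p'' q'' a b c. a \<in> G p q \<longrightarrow> b \<in> G p' q' \<longrightarrow> c \<in> G p'' q'' \<longrightarrow>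
        br a (br b c) = br (br a b) c + sgnp ((p + q - 1) * (p' + q' - 1)) (br b (br a c))) \<and>
     (\<forall>p q p' q' a b c. a \<in> G p q \<longrightarrow> b \<in> G p' q' \<longrightarrow>
        br a (b * c) = br a b * c + sgnp ((p + q - 1) * (p' + q')) (b * br a c))"

definition generates_bracket :: "(int \<Rightarrow> int \<Rightarrow> 'a::ring set) \<Rightarrow> ('a \<Rightarrow> 'a \<Rightarrow> 'a) \<Rightarrow> ('a \<Rightarrow> 'a) \<Rightarrow> bool" where
  "generates_bracket G br \<Delta> \<longleftrightarrow>
     (\<forall>p q p' q' a b. a \<in> G p q \<longrightarrow> b \<in> G p' q' \<longrightarrow>
        br a b = sgnp (p + q) (\<Delta> (a * b) - \<Delta> a * b - sgnp (p + q) (a * \<Delta> b)))"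

definition weak_bigraded_BV :: "('r::comm_ring_1 \<Rightarrow> 'a::ring \<Rightarrow> 'a) \<Rightarrow> (int \<Rightarrow> int \<Rightarrow> 'a set)
     \<Rightarrow> ('a \<Rightarrow> 'a \<Rightarrow> 'a) \<Rightarrow> ('a \<Rightarrow> 'a) \<Rightarrow> bool" where
  "weak_bigraded_BV scale G br \<Delta> \<longleftrightarrow>
     bigraded_gerstenhaber scale G br \<and>
     r_linear scale \<Delta> \<and>
     (\<forall>p q a. a \<in> G p q \<longrightarrow> \<Delta> a \<in> G p (q - 1)) \<and>
     generates_bracket G br \<Delta>"

end

theory Submission
  imports Defs
begin

lemma add_sum_hom:
  fixes f :: "'a::ab_group_add \<Rightarrow> 'b::ab_group_add"
  assumes "\<And>x y. f (x + y) = f x + f y" and "finite S"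
  shows "f (sum c S) = (\<Sum>i\<in>S. f (c i))"
proof -
  have f0: "f 0 = 0" using assms(1)[of 0 0] by simp
  show ?thesis using assms(2) by (induction S rule: finite_induct) (auto simp: f0 assms(1))
qed

theorem lemma5p4p2:
  fixes scale :: "'r::comm_ring_1 \<Rightarrow> 'a::ring \<Rightarrow> 'a"
    and G :: "int \<Rightarrow> int \<Rightarrow> 'a set"
    and br :: "'a \<Rightarrow> 'a \<Rightarrow> 'a"
    and \<Delta> \<delta> :: "'a \<Rightarrow> 'a"
  assumes BV: "weak_bigraded_BV scale G br \<Delta>"
    and lin: "r_linear scale \<delta>"
    and bideg: "\<forall>p q a. a \<in> G p q \<longrightarrow> \<delta> a \<in> G (p + 1) q"
    and der: "\<forall>p q a b. a \<in> G p q \<longrightarrow> \<delta> (a * b) = \<delta> a * b + sgnp (p + q) (a * \<delta> b)"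
  shows "(\<forall>p q p' q' x y. x \<in> G p q \<longrightarrow> y \<in> G p' q' \<longrightarrow>
            \<delta> (br x y) = br (\<delta> x) y - sgnp (p + q) (br x (\<delta> y)))
     \<longleftrightarrow> (\<forall>a b. (\<delta> (\<Delta> (a * b)) + \<Delta> (\<delta> (a * b)))
                 = (\<delta> (\<Delta> a) + \<Delta> (\<delta> a)) * b + a * (\<delta> (\<Delta> b) + \<Delta> (\<delta> b)))"
proof -
  have dadd: "\<And>x y. \<delta> (x + y) = \<delta> x + \<delta> y" using lin by (simp add: r_linear_def)
  have Dadd: "\<And>x y. \<Delta> (x + y) = \<Delta> x + \<Delta> y" using BV by (simp add: weak_bigraded_BV_def r_linear_def)
  have Ddeg: "\<And>p q a. a \<in> G p q \<Longrightarrow> \<Delta> a \<in> G p (q - 1)" using BV by (simp add: weak_bigraded_BV_def)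
  have gen: "\<And>p q p' q' a b. a \<in> G p q \<Longrightarrow> b \<in> G p' q' \<Longrightarrow>
        br a b = sgnp (p + q) (\<Delta> (a * b) - \<Delta> a * b - sgnp (p + q) (a * \<Delta> b))"
    using BV by (simp add: weak_bigraded_BV_def generates_bracket_def)
  have dd: "\<And>p q a b. a \<in> G p q \<Longrightarrow> \<delta> (a * b) = \<delta> a * b + sgnp (p + q) (a * \<delta> b)"
    using der by blast
  define F where "F a b = (\<delta> (\<Delta> (a * b)) + \<Delta> (\<delta> (a * b)))
                 - ((\<delta> (\<Delta> a) + \<Delta> (\<delta> a)) * b + a * (\<delta> (\<Delta> b) + \<Delta> (\<delta> b)))" for a b
  have key: "F a b = sgnp (p + q) (\<delta> (br a b) - br (\<delta> a) b + sgnp (p + q) (br a (\<delta> b)))"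
    if a: "a \<in> G p q" and b: "b \<in> G p' q'" for p q p' q' a b
  proof -
    have da: "\<delta> a \<in> G (p + 1) q" using bideg a by blast
    have db: "\<delta> b \<in> G (p' + 1) q'" using bideg b by blast
    have Da: "\<Delta> a \<in> G p (q - 1)" using Ddeg a by blast
    have g1: "br a b = sgnp (p + q) (\<Delta> (a * b) - \<Delta> a * b - sgnp (p + q) (a * \<Delta> b))"
      using gen a b by blast
    have g2: "br (\<delta> a) b = sgnp (p + 1 + q) (\<Delta> (\<delta> a * b) - \<Delta> (\<delta> a) * b - sgnp (p + 1 + q) (\<delta> a * \<Delta> b))"
      using gen da b by blast
    have g3: "br a (\<delta> b) = sgnp (p + q) (\<Delta> (a * \<delta> b) - \<Delta> a * \<delta> b - sgnp (p + q) (a * \<Delta> (\<delta> b)))"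
      using gen a db by blast
    have e1: "\<delta> (a * b) = \<delta> a * b + sgnp (p + q) (a * \<delta> b)" using dd a by blast
    have e2: "\<delta> (\<Delta> a * b) = \<delta> (\<Delta> a) * b + sgnp (p + (q - 1)) (\<Delta> a * \<delta> b)" using dd Da by blast
    have e3: "\<delta> (a * \<Delta> b) = \<delta> a * \<Delta> b + sgnp (p + q) (a * \<delta> (\<Delta> b))" using dd a by blast
    have d0: "\<delta> 0 = 0" using dadd[of 0 0] by simp
    have D0: "\<Delta> 0 = 0" using Dadd[of 0 0] by simp
    have dneg: "\<delta> (- x) = - \<delta> x" for x using dadd[of x "-x"] d0 by (simp add: minus_unique[symmetric])
    have Dneg: "\<Delta> (- x) = - \<Delta> x" for x using Dadd[of x "-x"] D0 by (simp add: minus_unique[symmetric])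
    have dsub: "\<delta> (x - y) = \<delta> x - \<delta> y" for x y by (metis diff_conv_add_uminus dadd dneg)
    have Dsub: "\<Delta> (x - y) = \<Delta> x - \<Delta> y" for x y by (metis diff_conv_add_uminus Dadd Dneg)
    have A: "\<Delta> (a * b) = sgnp (p + q) (br a b) + \<Delta> a * b + sgnp (p + q) (a * \<Delta> b)"
      using g1 by (simp add: sgnp_def algebra_simps)
    show ?thesis
    proof (cases "even (p + q)")
      case True
      then have o1: "odd (p + 1 + q)" and o2: "odd (p + (q - 1))" by auto
      have s1: "sgnp (p + q) x = x" for x using True by (simp add: sgnp_def)
      have s2: "sgnp (p + 1 + q) x = - x" for x using o1 by (simp add: sgnp_def)
      have s3: "sgnp (p + (q - 1)) x = - x" for x using o2 by (simp add: sgnp_def)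
      have h1: "\<Delta> (a * b) = br a b + \<Delta> a * b + a * \<Delta> b" using g1 unfolding s1 by (simp add: algebra_simps)
      have h2: "\<Delta> (\<delta> a * b) = - br (\<delta> a) b + \<Delta> (\<delta> a) * b - \<delta> a * \<Delta> b"
        using g2 unfolding s2 by (simp add: algebra_simps)
      have h3: "\<Delta> (a * \<delta> b) = br a (\<delta> b) + \<Delta> a * \<delta> b + a * \<Delta> (\<delta> b)"
        using g3 unfolding s1 by (simp add: algebra_simps)
      have k1: "\<delta> (\<Delta> (a * b)) = \<delta> (br a b) + (\<delta> (\<Delta> a) * b + - (\<Delta> a * \<delta> b)) + (\<delta> a * \<Delta> b + a * \<delta> (\<Delta> b))"
        by (simp only: h1 dadd e2 e3 s1 s3)
      have k2: "\<Delta> (\<delta> (a * b)) = - br (\<delta> a) b + \<Delta> (\<delta> a) * b - \<delta> a * \<Delta> b + br a (\<delta> b) + \<Delta> a * \<delta> b + a * \<Delta> (\<delta> b)"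
        unfolding e1 s1 Dadd h2 h3 by (simp add: algebra_simps)
      show ?thesis unfolding F_def k1 k2 s1 by (simp add: algebra_simps)
    next
      case False
      then have o1: "even (p + 1 + q)" and o2: "even (p + (q - 1))" by auto
      have s1: "sgnp (p + q) x = - x" for x using False by (simp add: sgnp_def)
      have s2: "sgnp (p + 1 + q) x = x" for x using o1 by (simp add: sgnp_def)
      have s3: "sgnp (p + (q - 1)) x = x" for x using o2 by (simp add: sgnp_def)
      have h1: "\<Delta> (a * b) = - br a b + \<Delta> a * b - a * \<Delta> b" using g1 unfolding s1 by (simp add: algebra_simps)
      have h2: "\<Delta> (\<delta> a * b) = br (\<delta> a) b + \<Delta> (\<delta> a) * b + \<delta> a * \<Delta> b"
        using g2 unfolding s2 by (simp add: algebra_simps)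
      have h3: "\<Delta> (a * \<delta> b) = - br a (\<delta> b) + \<Delta> a * \<delta> b - a * \<Delta> (\<delta> b)"
        using g3 unfolding s1 by (simp add: algebra_simps)
      have k1: "\<delta> (\<Delta> (a * b)) = - \<delta> (br a b) + (\<delta> (\<Delta> a) * b + \<Delta> a * \<delta> b) - (\<delta> a * \<Delta> b + - (a * \<delta> (\<Delta> b)))"
        by (simp only: h1 dadd dsub dneg e2 e3 s1 s3)
      have k2: "\<Delta> (\<delta> (a * b)) = br (\<delta> a) b + \<Delta> (\<delta> a) * b + \<delta> a * \<Delta> b + br a (\<delta> b) - \<Delta> a * \<delta> b + a * \<Delta> (\<delta> b)"
        unfolding e1 s1 Dadd Dneg h2 h3 by (simp add: algebra_simps)
      show ?thesis unfolding F_def k1 k2 s1 by (simp add: algebra_simps)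
    qed
  qed
  have decomp: "\<forall>x. \<exists>S c. finite S \<and> (\<forall>pq\<in>S. c pq \<in> G (fst pq) (snd pq)) \<and> x = sum c S"
    using BV unfolding weak_bigraded_BV_def bigraded_gerstenhaber_def bigraded_comm_algebra_def
      bigraded_module_def by (elim conjE) assumption
  have Fadd1: "F (x + y) b = F x b + F y b" for x y b
    by (simp add: F_def dadd Dadd algebra_simps)
  have Fadd2: "F a (x + y) = F a x + F a y" for x y a
    by (simp add: F_def dadd Dadd algebra_simps)
  have Feq: "(\<delta> (\<Delta> (a * b)) + \<Delta> (\<delta> (a * b)))
                 = (\<delta> (\<Delta> a) + \<Delta> (\<delta> a)) * b + a * (\<delta> (\<Delta> b) + \<Delta> (\<delta> b)) \<longleftrightarrow> F a b = 0" for a b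
    by (simp add: F_def)
  show ?thesis
  proof
    assume L: "\<forall>p q p' q' x y. x \<in> G p q \<longrightarrow> y \<in> G p' q' \<longrightarrow>
            \<delta> (br x y) = br (\<delta> x) y - sgnp (p + q) (br x (\<delta> y))"
    have hom: "F a b = 0" if "a \<in> G p q" "b \<in> G p' q'" for a b p q p' q'
    proof -
      have "\<delta> (br a b) = br (\<delta> a) b - sgnp (p + q) (br a (\<delta> b))" using L that by blast
      then have "\<delta> (br a b) - br (\<delta> a) b + sgnp (p + q) (br a (\<delta> b)) = 0" by simp
      then show ?thesis using key[OF that] by (simp add: sgnp_def)
    qed
    have hom1: "F a b = 0" if "a \<in> G p q" for a b p q
    proof -
      obtain S c where S: "finite S" "\<forall>pq\<in>S. c pq \<in> G (fst pq) (snd pq)" "b = sum c S"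
        using decomp by blast
      have "F a b = (\<Sum>i\<in>S. F a (c i))" unfolding S(3) by (rule add_sum_hom[OF Fadd2 S(1)])
      also have "\<dots> = 0" using hom[OF that] S(2) by (intro sum.neutral) blast
      finally show ?thesis .
    qed
    show "\<forall>a b. (\<delta> (\<Delta> (a * b)) + \<Delta> (\<delta> (a * b)))
                 = (\<delta> (\<Delta> a) + \<Delta> (\<delta> a)) * b + a * (\<delta> (\<Delta> b) + \<Delta> (\<delta> b))"
    proof (intro allI)
      fix a b
      obtain S c where S: "finite S" "\<forall>pq\<in>S. c pq \<in> G (fst pq) (snd pq)" "a = sum c S"
        using decomp by blast
      have "F a b = (\<Sum>i\<in>S. F (c i) b)" unfolding S(3) by (rule add_sum_hom[OF Fadd1 S(1)])
      also have "\<dots> = 0" using hom1 S(2) by (intro sum.neutral) blast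
      finally show "(\<delta> (\<Delta> (a * b)) + \<Delta> (\<delta> (a * b)))
                 = (\<delta> (\<Delta> a) + \<Delta> (\<delta> a)) * b + a * (\<delta> (\<Delta> b) + \<Delta> (\<delta> b))"
        using Feq by blast
    qed
  next
    assume R: "\<forall>a b. (\<delta> (\<Delta> (a * b)) + \<Delta> (\<delta> (a * b)))
                 = (\<delta> (\<Delta> a) + \<Delta> (\<delta> a)) * b + a * (\<delta> (\<Delta> b) + \<Delta> (\<delta> b))"
    show "\<forall>p q p' q' x y. x \<in> G p q \<longrightarrow> y \<in> G p' q' \<longrightarrow>
            \<delta> (br x y) = br (\<delta> x) y - sgnp (p + q) (br x (\<delta> y))"
    proof (intro allI impI)
      fix p q p' q' x y
      assume x: "x \<in> G p q" and y: "y \<in> G p' q'"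
      have "F x y = 0" using R Feq by blast
      then have "\<delta> (br x y) - br (\<delta> x) y + sgnp (p + q) (br x (\<delta> y)) = 0"
        using key[OF x y] by (simp add: sgnp_def split: if_splits)
      then show "\<delta> (br x y) = br (\<delta> x) y - sgnp (p + q) (br x (\<delta> y))"
        by (simp add: algebra_simps)
    qed
  qed
qed

end
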